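(* For every prime power $q$ of characteristic $p\ge3$, the number $I_{\mathrm{L}}(q)$ of $\mathbb{F}_q$-isomorphism classes of Legendre curves $E_{\mathrm{L},u}$, $u\in\mathbb{F}_q\setminus\{0,1\}$, is $$I_{\mathrm{L}}(q)=\begin{cases}\lfloor (7q+29)/24\rfloor,& q\equiv1\pmod{12},\\ \lfloor (q+2)/3\rfloor,& q\equiv3,7\pmod{12},\\ \lfloor (7q+13)/24\rfloor,& q\equiv5,9\pmod{12},\\ (q-2)/3,& q\equiv11\pmod{12}.\end{cases}$$
   Context: For $u\in\mathbb{F}_q\setminus\{0,1\}$, $E_{\mathrm{L},u}$ is the elliptic curve $Y^2=X(X-1)(X-u)$ over $\mathbb{F}_q$. Two elliptic curves in Weierstrass form are $\mathbb{F}_q$-isomorphic if one is transformed into the other by $X\mapsto\alpha^2\tilde X+\beta$, $Y\mapsto\alpha^3\tilde Y+\alpha^2\gamma\tilde X+\delta$ with $\alpha,\beta,\gamma,\delta\in\mathbb{F}_q$, $\alpha\ne0$. $I_{\mathrm{L}}(q)$ is the number of equivalence classes of the set $\{E_{\mathrm{L},u}: u\in\mathbb{F}_q\setminus\{0,1\}\}$ under $\mathbb{F}_q$-isomorphism. *)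

theory Defs
  imports Main
begin

text \<open>Weierstrass coefficients (a1,a2,a3,a4,a6) of Y^2 + a1 XY + a3 Y = X^3 + a2 X^2 + a4 X + a6.\<close>
type_synonym 'a weier = "'a \<times> 'a \<times> 'a \<times> 'a \<times> 'a"

text \<open>Legendre curve Y^2 = X(X-1)(X-u) = X^3 - (1+u) X^2 + u X.\<close>
definition legendre_curve :: "'a::field \<Rightarrow> 'a weier" where
  "legendre_curve u = (0, -(1 + u), 0, u, 0)"

text \<open>Coefficients of the curve obtained by substituting X = al^2 X' + be,
  Y = al^3 Y' + al^2 ga X' + de into the equation of E and dividing by al^6
  (standard formulas, Silverman III.1).\<close>
definition weier_transform :: "'a::field \<Rightarrow> 'a \<Rightarrow> 'a \<Rightarrow> 'a \<Rightarrow> 'a weier \<Rightarrow> 'a weier" where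
  "weier_transform al be ga de E = (case E of (a1, a2, a3, a4, a6) \<Rightarrow>
     ((a1 + 2*ga) / al,
      (a2 - ga*a1 + 3*be - ga^2) / al^2,
      (a3 + be*a1 + 2*de) / al^3,
      (a4 - ga*a3 + 2*be*a2 - (de + be*ga)*a1 + 3*be^2 - 2*ga*de) / al^4,
      (a6 + be*a4 + be^2*a2 + be^3 - de*a3 - de^2 - be*de*a1) / al^6))"

definition weier_iso :: "'a::field weier \<Rightarrow> 'a weier \<Rightarrow> bool" where
  "weier_iso E E' \<longleftrightarrow> (\<exists>al be ga de. al \<noteq> 0 \<and> weier_transform al be ga de E = E')"

definition legendre_iso_rel :: "('a::field \<times> 'a) set" where
  "legendre_iso_rel = {(u, v). u \<notin> {0, 1} \<and> v \<notin> {0, 1} \<and>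
                         weier_iso (legendre_curve u) (legendre_curve v)}"

definition I_L :: "'a::{finite, field} itself \<Rightarrow> nat" where
  "I_L _ = card ((UNIV - {0, 1 :: 'a}) // legendre_iso_rel)"

end

theory Submission
  imports Defs Complex_Main
begin


definition sq :: "'a::field \<Rightarrow> bool" where "sq x \<longleftrightarrow> (\<exists>t. x = t^2)"

lemma weier_eqs:
  fixes u v al be ga de :: "'a::field"
  assumes two: "(2::'a) \<noteq> 0" and al: "al \<noteq> 0"
    and eq: "weier_transform al be ga de (legendre_curve u) = legendre_curve v"
  shows "ga = 0 \<and> de = 0 \<and> 3*be - 1 - u = - (1+v)*al^2 \<and> u - 2*be*(1+u) + 3*be^2 = v*al^4
     \<and> be*(be-1)*(be-u) = 0"
proof -
  from eq have e1: "2*ga/al = 0" and e3: "2*de/al^3 = 0"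
    and e2: "(-(1+u) + 3*be - ga^2)/al^2 = -(1+v)"
    and e4: "(u + 2*be*(-(1+u)) + 3*be^2 - 2*ga*de)/al^4 = v"
    and e6: "(be*u + be^2*(-(1+u)) + be^3 - de^2)/al^6 = 0"
    by (auto simp: weier_transform_def legendre_curve_def algebra_simps)
  have ga: "ga = 0" using e1 two al by auto
  have de: "de = 0" using e3 two al by auto
  have a: "3*be - 1 - u = - (1+v)*al^2" using e2 al unfolding ga by (simp add: field_simps)
  have b: "u - 2*be*(1+u) + 3*be^2 = v*al^4" using e4 al unfolding ga de by (simp add: field_simps)
  have c: "be*u + be^2*(-(1+u)) + be^3 = 0" using e6 al unfolding de by simp
  have d: "be*(be-1)*(be-u) = 0" using c by (simp add: algebra_simps power2_eq_square power3_eq_cube)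
  show ?thesis using a b d ga de by simp
qed

lemma poly_id:
  fixes u v m b x :: "'a::field"
  assumes a: "3*b - 1 - u = - (1+v)*m" and c: "u - 2*b*(1+u) + 3*b^2 = v*m^2"
    and d: "b*(b-1)*(b-u) = 0"
  shows "(m*x+b)*(m*x+b-1)*(m*x+b-u) = m^3*(x*(x-1)*(x-v))"
proof -
  have "(m*x+b)*(m*x+b-1)*(m*x+b-u) = m^3*x^3 + m^2*x^2*(3*b-1-u) + m*x*(u - 2*b*(1+u)+3*b^2) + b*(b-1)*(b-u)"
    by (simp add: algebra_simps power2_eq_square power3_eq_cube)
  also have "\<dots> = m^3*x^3 + m^2*x^2*(- (1+v)*m) + m*x*(v*m^2)"
    using a c d by simp
  also have "\<dots> = m^3*(x*(x-1)*(x-v))"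
    by (simp add: algebra_simps power2_eq_square power3_eq_cube)
  finally show ?thesis .
qed

lemma weier_leg_imp:
  fixes u v :: "'a::field"
  assumes two: "(2::'a) \<noteq> 0"
    and iso: "weier_iso (legendre_curve u) (legendre_curve v)"
  shows "\<exists>m b. m \<noteq> 0 \<and> sq m \<and> (\<lambda>x. m*x+b) ` {0,1,v} = {0,1,u}"
proof -
  obtain al be ga de where al: "al \<noteq> 0" and eq: "weier_transform al be ga de (legendre_curve u) = legendre_curve v"
    using iso unfolding weier_iso_def by blast
  define m where "m = al^2"
  have m0: "m \<noteq> 0" using al by (simp add: m_def)
  from weier_eqs[OF two al eq] have
    a: "3*be - 1 - u = - (1+v)*m" and c: "u - 2*be*(1+u) + 3*be^2 = v*m^2"
    and d: "be*(be-1)*(be-u) = 0"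
    by (auto simp: m_def power_mult[symmetric])
  note P = poly_id[OF a c d]
  have "(\<lambda>x. m*x+be) ` {0,1,v} = {0,1,u}"
  proof
    show "(\<lambda>x. m*x+be) ` {0,1,v} \<subseteq> {0,1,u}"
    proof
      fix y assume "y \<in> (\<lambda>x. m*x+be) ` {0,1,v}"
      then obtain x where x: "x \<in> {0,1,v}" and y: "y = m*x+be" by blast
      have "m^3*(x*(x-1)*(x-v)) = 0" using x by auto
      then have "y*(y-1)*(y-u) = 0" using P[of x] y by simp
      then show "y \<in> {0,1,u}" by auto
    qed
  next
    show "{0,1,u} \<subseteq> (\<lambda>x. m*x+be) ` {0,1,v}"
    proof
      fix y assume y: "y \<in> {0,1,u}"
      define x where "x = (y - be)/m"
      have yx: "y = m*x+be" using m0 by (simp add: x_def)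
      have "y*(y-1)*(y-u) = 0" using y by auto
      then have "m^3*(x*(x-1)*(x-v)) = 0" using P[of x] yx by simp
      then have "x \<in> {0,1,v}" using m0 by auto
      then show "y \<in> (\<lambda>x. m*x+be) ` {0,1,v}" using yx by blast
    qed
  qed
  moreover have "sq m" by (auto simp: sq_def m_def)
  ultimately show ?thesis using m0 by blast
qed

lemma weier_leg_rev:
  fixes u v m b :: "'a::field"
  assumes u: "u \<notin> {0,1}" and v: "v \<notin> {0,1}" and m0: "m \<noteq> 0" and sqm: "sq m"
    and img: "(\<lambda>x. m*x+b) ` {0,1,v} = {0,1,u}"
  shows "weier_iso (legendre_curve u) (legendre_curve v)"
proof -
  obtain t where t: "m = t^2" using sqm by (auto simp: sq_def)
  have t0: "t \<noteq> 0" using m0 t by auto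
  have h1: "b \<in> {0,1,u}" "m+b \<in> {0,1,u}" "m*v+b \<in> {0,1,u}" using img by auto
  have hu: "u \<in> (\<lambda>x. m*x+b) ` {0,1,v}" "0 \<in> (\<lambda>x. m*x+b) ` {0,1,v}" "1 \<in> (\<lambda>x. m*x+b) ` {0,1,v}"
    using img by auto
  have dist: "b \<noteq> m+b" "b \<noteq> m*v+b" "m+b \<noteq> m*v+b" using m0 v by auto
  have key: "3*b - 1 - u = - (1+v)*m \<and> u - 2*b*(1+u) + 3*b^2 = v*m^2 \<and> b*(b-1)*(b-u) = 0"
  proof -
    have bc: "b = 0 \<or> b = 1 \<or> b = u" using h1(1) by auto
    have mc: "m+b = 0 \<or> m+b = 1 \<or> m+b = u" using h1(2) by auto
    have vc: "m*v+b = 0 \<or> m*v+b = 1 \<or> m*v+b = u" using h1(3) by auto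
    have u0: "u \<noteq> 0" "u \<noteq> 1" using u by auto
    show ?thesis
    proof (rule disjE[OF bc]; (elim disjE)?)
      assume b: "b = 0"
      then have "m = 1 \<or> m = u" using mc m0 by auto
      then show ?thesis
      proof
        assume mm: "m = 1" then have "v = u" using vc b v by auto
        then show ?thesis using b mm by simp
      next
        assume mm: "m = u" then have "u*v = 1" using vc b v u0 dist by auto
        then show ?thesis unfolding b mm by (simp; intro conjI; algebra)
      qed
    next
      assume b: "b = 1"
      then have "m = -1 \<or> m = u - 1" using mc m0 by (auto simp: algebra_simps add_eq_0_iff)
      then show ?thesis
      proof
        assume mm: "m = -1" then have "v = 1 - u" using vc b v dist by (auto simp: algebra_simps)
        then show ?thesis unfolding b mm by (simp; intro conjI; algebra)
      next
        assume mm: "m = u - 1" then have "(u-1)*v = -1" using vc b v u0 dist by (auto simp: algebra_simps)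
        then show ?thesis unfolding b mm by (simp; intro conjI; algebra)
      qed
    next
      assume b: "b = u"
      then have "m = -u \<or> m = 1 - u" using mc m0 by (auto simp: algebra_simps add_eq_0_iff)
      then show ?thesis
      proof
        assume mm: "m = -u" then have "u*v = u - 1" using vc b v dist by (auto simp: algebra_simps)
        then show ?thesis unfolding b mm by (simp; intro conjI; algebra)
      next
        assume mm: "m = 1 - u" have "m*v+b = 0" using vc b dist mm by auto
        then have "(1-u)*v = -u" unfolding mm b by (simp add: algebra_simps add_eq_0_iff)
        then show ?thesis unfolding b mm by (simp; intro conjI; algebra)
      qed
    qed
  qed
  show ?thesis unfolding weier_iso_def
  proof (intro exI conjI)
    show "t \<noteq> 0" by (rule t0)
    have k: "3*b - 1 - u = - (1+v)*t^2" "u - 2*b*(1+u) + 3*b^2 = v*t^4" "b*(b-1)*(b-u) = 0"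
      using key unfolding t by (auto simp: power_mult[symmetric])
    have k1: "(-(1+u)+3*b - 0^2)/t^2 = -(1+v)" using k(1) t0 by (simp add: field_simps)
    have k2: "(u - 0*0 + 2*b*(-(1+u)) - (0 + b*0)*0 + 3*b^2 - 2*0*0)/t^4 = v" using k(2) t0 by (simp add: field_simps)
    have k3: "(0 + b*u + b^2*(-(1+u)) + b^3 - 0*0 - 0^2 - b*0*0)/t^6 = 0"
    proof -
      have "0 + b*u + b^2*(-(1+u)) + b^3 - 0*0 - 0^2 - b*0*0 = b*(b-1)*(b-u)"
        by (simp add: algebra_simps power2_eq_square power3_eq_cube)
      then show ?thesis using k(3) by simp
    qed
    show "weier_transform t b 0 0 (legendre_curve u) = legendre_curve v"
      unfolding weier_transform_def legendre_curve_def using k1 k2 k3 by simp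
  qed
qed

lemma img_cases:
  fixes u v m b :: "'a::field"
  assumes u: "u \<notin> {0,1}" and v: "v \<notin> {0,1}" and m0: "m \<noteq> 0"
    and img: "(\<lambda>x. m*x+b) ` {0,1,v} = {0,1,u}"
  shows "(b=0 \<and> m=1 \<and> v=u) \<or> (b=0 \<and> m=u \<and> u*v=1) \<or> (b=1 \<and> m=-1 \<and> v=1-u)
       \<or> (b=1 \<and> m=u-1 \<and> (u-1)*v = -1) \<or> (b=u \<and> m=-u \<and> u*v=u-1) \<or> (b=u \<and> m=1-u \<and> (1-u)*v=-u)"
proof -
  have h1: "b \<in> {0,1,u}" "m+b \<in> {0,1,u}" "m*v+b \<in> {0,1,u}" using img by auto
  have dist: "b \<noteq> m+b" "b \<noteq> m*v+b" "m+b \<noteq> m*v+b" using m0 v by auto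
  have bc: "b = 0 \<or> b = 1 \<or> b = u" using h1(1) by auto
  have mc: "m+b = 0 \<or> m+b = 1 \<or> m+b = u" using h1(2) by auto
  have vc: "m*v+b = 0 \<or> m*v+b = 1 \<or> m*v+b = u" using h1(3) by auto
  have u0: "u \<noteq> 0" "u \<noteq> 1" using u by auto
  show ?thesis
  proof (rule disjE[OF bc]; (elim disjE)?)
    assume b: "b = 0"
    then have "m = 1 \<or> m = u" using mc m0 by auto
    then show ?thesis
    proof
      assume mm: "m = 1" then have "v = u" using vc b v by auto
      then show ?thesis using b mm by simp
    next
      assume mm: "m = u" have "m*v+b = 1" using vc b dist mm u0 v by auto
      then show ?thesis using b mm by simp
    qed
  next
    assume b: "b = 1"
    then have "m = -1 \<or> m = u - 1" using mc m0 by (auto simp: algebra_simps add_eq_0_iff)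
    then show ?thesis
    proof
      assume mm: "m = -1" have "m*v+b = u" using vc b dist mm by auto
      then have "v = 1 - u" unfolding mm b by (auto simp: algebra_simps)
      then show ?thesis using b mm by simp
    next
      assume mm: "m = u - 1" have "m*v+b = 0" using vc b dist mm by auto
      then have "(u-1)*v = -1" unfolding mm b by (simp add: algebra_simps add_eq_0_iff)
      then show ?thesis using b mm by simp
    qed
  next
    assume b: "b = u"
    then have "m = -u \<or> m = 1 - u" using mc m0 by (auto simp: algebra_simps add_eq_0_iff)
    then show ?thesis
    proof
      assume mm: "m = -u" have "m*v+b = 1" using vc b dist mm by auto
      then have "u*v = u-1" unfolding mm b by (simp add: algebra_simps)
      then show ?thesis using b mm by simp
    next
      assume mm: "m = 1 - u" have "m*v+b = 0" using vc b dist mm by auto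
      then have "(1-u)*v = -u" unfolding mm b by (simp add: algebra_simps add_eq_0_iff)
      then show ?thesis using b mm by simp
    qed
  qed
qed

lemma ex_aff: "m \<noteq> 0 \<Longrightarrow> sq m \<Longrightarrow> (\<lambda>x. m*x+b) ` A = B \<Longrightarrow> \<exists>m b. m \<noteq> 0 \<and> sq m \<and> (\<lambda>x. m*x+b) ` A = B"
  by blast

lemma aff_refl: "\<exists>m b. m \<noteq> 0 \<and> sq m \<and> (\<lambda>x. m*x+b) ` A = (A::'a::field set)"
  by (rule ex_aff[where m=1 and b=0]) (auto simp: sq_def intro: exI[of _ 1])

definition affrel :: "('a::field \<times> 'a) set" where
  "affrel = {(u,v). u \<notin> {0,1} \<and> v \<notin> {0,1} \<and> (\<exists>m b. m \<noteq> 0 \<and> sq m \<and> (\<lambda>x. m*x+b) ` {0,1,v} = {0,1,u})}"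

lemma rel_eq:
  assumes "(2::'a::field) \<noteq> 0"
  shows "legendre_iso_rel = (affrel :: ('a \<times> 'a) set)"
proof (rule set_eqI)
  fix p :: "'a \<times> 'a"
  obtain u v where p: "p = (u,v)" by (cases p)
  have "weier_iso (legendre_curve u) (legendre_curve v) \<longleftrightarrow> (\<exists>m b. m \<noteq> 0 \<and> sq m \<and> (\<lambda>x. m*x+b) ` {0,1,v} = {0,1,u})"
    if "u \<notin> {0,1}" "v \<notin> {0,1}"
  proof
    assume "weier_iso (legendre_curve u) (legendre_curve v)"
    then show "\<exists>m b. m \<noteq> 0 \<and> sq m \<and> (\<lambda>x. m*x+b) ` {0,1,v} = {0,1,u}" by (rule weier_leg_imp[OF assms])
  next
    assume "\<exists>m b. m \<noteq> 0 \<and> sq m \<and> (\<lambda>x. m*x+b) ` {0,1,v} = {0,1,u}"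
    then obtain m b where "m \<noteq> 0" "sq m" "(\<lambda>x. m*x+b) ` {0,1,v} = {0,1,u}" by blast
    then show "weier_iso (legendre_curve u) (legendre_curve v)" using weier_leg_rev that by blast
  qed
  then show "p \<in> legendre_iso_rel \<longleftrightarrow> p \<in> affrel"
    unfolding legendre_iso_rel_def affrel_def p by auto
qed

lemma sq_mult: "sq a \<Longrightarrow> sq b \<Longrightarrow> sq (a*b)"
  unfolding sq_def by (auto simp: power_mult_distrib[symmetric])

lemma sq_inv: "sq a \<Longrightarrow> sq (1/a)"
  unfolding sq_def by (auto simp: power_one_over[symmetric])

lemma affrel_equiv: "equiv (UNIV - {0,1::'a::field}) affrel"
proof (rule equivI)
  show "affrel \<subseteq> (UNIV - {0,1::'a}) \<times> (UNIV - {0,1})" by (auto simp: affrel_def)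
next
  show "refl_on (UNIV - {0,1::'a}) affrel"
  proof (rule refl_onI)
    fix x :: 'a assume "x \<in> UNIV - {0,1}"
    then show "(x,x) \<in> affrel" unfolding affrel_def
      using aff_refl[of "{0,1,x}"] by auto
  qed
next
  show "sym (affrel :: ('a \<times> 'a) set)"
  proof (rule symI)
    fix u v :: 'a assume "(u,v) \<in> affrel"
    then obtain m b where uv: "u \<notin> {0,1}" "v \<notin> {0,1}" and m: "m \<noteq> 0" "sq m"
      and img: "(\<lambda>x. m*x+b) ` {0,1,v} = {0,1,u}" unfolding affrel_def by blast
    have "(\<lambda>y. (1/m)*y + (-b/m)) ` {0,1,u} = (\<lambda>y. (1/m)*y + (-b/m)) ` ((\<lambda>x. m*x+b) ` {0,1,v})"
      using img by simp
    also have "\<dots> = (\<lambda>x. (1/m)*(m*x+b) + (-b/m)) ` {0,1,v}" by (simp add: image_image)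
    also have "\<dots> = {0,1,v}" using m by (simp add: field_simps)
    finally have "\<exists>m b. m \<noteq> 0 \<and> sq m \<and> (\<lambda>x. m*x+b) ` {0,1,u} = {0,1,v}"
      using m sq_inv[of m] by (intro ex_aff[where m="1/m" and b="-b/m"]) auto
    then show "(v,u) \<in> affrel" unfolding affrel_def using uv by simp
  qed
next
  show "trans (affrel :: ('a \<times> 'a) set)"
  proof (rule transI)
    fix u v w :: 'a assume "(u,v) \<in> affrel" "(v,w) \<in> affrel"
    then obtain m b m' b' where uv: "u \<notin> {0,1}" "w \<notin> {0,1}" and m: "m \<noteq> 0" "sq m" "m' \<noteq> 0" "sq m'"
      and img: "(\<lambda>x. m*x+b) ` {0,1,v} = {0,1,u}" and img': "(\<lambda>x. m'*x+b') ` {0,1,w} = {0,1,v}"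
      unfolding affrel_def by blast
    have "(\<lambda>x. (m*m')*x + (m*b'+b)) ` {0,1,w} = (\<lambda>x. m*x+b) ` ((\<lambda>x. m'*x+b') ` {0,1,w})"
      by (simp add: image_image algebra_simps)
    also have "\<dots> = {0,1,u}" using img img' by simp
    finally have "\<exists>m b. m \<noteq> 0 \<and> sq m \<and> (\<lambda>x. m*x+b) ` {0,1,w} = {0,1,u}"
      using m sq_mult[of m m'] by (intro ex_aff[where m="m*m'" and b="m*b'+b"]) auto
    then show "(u,w) \<in> affrel" unfolding affrel_def using uv by simp
  qed
qed

definition Cl :: "'a::field \<Rightarrow> 'a set" where
  "Cl u = {v. v = u \<or> (sq (-1::'a) \<and> v = 1-u) \<or> (sq u \<and> v = 1/u) \<or> (sq (-u) \<and> v = (u-1)/u)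
     \<or> (sq (u-1) \<and> v = 1/(1-u)) \<or> (sq (1-u) \<and> v = u/(u-1))}"

lemma Cl_sub: "u \<notin> {0,1::'a::field} \<Longrightarrow> Cl u \<subseteq> UNIV - {0,1}"
  unfolding Cl_def by (auto simp: field_simps)

lemma affrel_class: 
  fixes u :: "'a::field"
  assumes u: "u \<notin> {0,1}"
  shows "affrel `` {u} = Cl u"
proof
  show "affrel `` {u} \<subseteq> Cl u"
  proof
    fix v assume "v \<in> affrel `` {u}"
    then obtain m b where v: "v \<notin> {0,1}" and m: "m \<noteq> 0" "sq m"
      and img: "(\<lambda>x. m*x+b) ` {0,1,v} = {0,1,u}" unfolding affrel_def by blast
    have u0: "u \<noteq> 0" "u \<noteq> 1" using u by auto
    from img_cases[OF u v m(1) img] show "v \<in> Cl u"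
    proof (elim disjE conjE)
      assume "m = 1" "v = u" then show ?thesis by (simp add: Cl_def)
    next
      assume "m = u" "u*v = 1" then show ?thesis using m(2) u0 by (simp add: Cl_def field_simps)
    next
      assume "m = -1" "v = 1-u" then show ?thesis using m(2) by (simp add: Cl_def)
    next
      assume "m = u-1" "(u-1)*v = -1"
      then have "v = 1/(1-u)" using u0 by (simp add: field_simps)
      then show ?thesis using m(2) \<open>m = u-1\<close> by (simp add: Cl_def)
    next
      assume "m = -u" "u*v = u-1"
      then have "v = (u-1)/u" using u0 by (simp add: field_simps)
      then show ?thesis using m(2) \<open>m = -u\<close> by (simp add: Cl_def)
    next
      assume "m = 1-u" "(1-u)*v = -u"
      then have "v = u/(u-1)" using u0 by (simp add: field_simps)
      then show ?thesis using m(2) \<open>m = 1-u\<close> by (simp add: Cl_def)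
    qed
  qed
next
  show "Cl u \<subseteq> affrel `` {u}"
  proof
    fix v assume vC: "v \<in> Cl u"
    have v: "v \<notin> {0,1}" using Cl_sub[OF u] vC by auto
    have u0: "u \<noteq> 0" "u \<noteq> 1" using u by auto
    have "\<exists>m b. m \<noteq> 0 \<and> sq m \<and> (\<lambda>x. m*x+b) ` {0,1,v} = {0,1,u}"
      using vC unfolding Cl_def
    proof (elim CollectE disjE conjE)
      assume "v = u" then show ?thesis using aff_refl[of "{0,1,u}"] by simp
    next
      assume a: "sq (-1::'a)" "v = 1-u" show ?thesis by (rule ex_aff[where m="-1" and b=1]) (use a in auto)
    next
      assume a: "sq u" "v = 1/u" show ?thesis by (rule ex_aff[where m=u and b=0]) (auto simp: a u0)
    next
      assume a: "sq (-u)" "v = (u-1)/u" show ?thesis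
        by (rule ex_aff[where m="-u" and b=u]) (auto simp: a u0 field_simps)
    next
      assume a: "sq (u-1)" "v = 1/(1-u)" have u1: "1 - u \<noteq> 0" using u0 by simp 
      show ?thesis
        by (rule ex_aff[where m="u-1" and b=1]) (auto simp: a u0 u1 field_simps)
    next
      assume a: "sq (1-u)" "v = u/(u-1)" have u1: "u - 1 \<noteq> 0" using u0 by simp 
      show ?thesis
        by (rule ex_aff[where m="1-u" and b=u]) (auto simp: a u0 u1 field_simps)
    qed
    then show "v \<in> affrel `` {u}" using u v unfolding affrel_def by blast
  qed
qed



lemma card_quotient_sum:
  assumes fin: "finite A" and eq: "equiv A r"
  shows "real (card (A // r)) = (\<Sum>x\<in>A. 1 / real (card (r``{x})))"
proof -
  have U: "\<Union>(A // r) = A" using Union_quotient[OF eq] .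
  have finq: "finite (A // r)" using fin by (rule finite_quotient) (rule equiv_type[OF eq])
  have finX: "\<forall>X\<in>A // r. finite X"
    using fin U by (metis Union_upper finite_subset)
  have "(\<Sum>x\<in>A. 1 / real (card (r``{x}))) = (\<Sum>x\<in>\<Union>(A // r). 1 / real (card (r``{x})))"
    using U by simp
  also have "\<dots> = (\<Sum>X\<in>A // r. \<Sum>x\<in>X. 1 / real (card (r``{x})))"
    using sum.Union_disjoint[of "A // r" "\<lambda>x. 1 / real (card (r``{x}))"] finX quotient_disj[OF eq]
    by (auto simp: o_def)
  also have "\<dots> = (\<Sum>X\<in>A // r. 1)"
  proof (rule sum.cong[OF refl])
    fix X assume X: "X \<in> A // r"
    then obtain a where a: "a \<in> A" "X = r``{a}" by (auto elim: quotientE)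
    have "\<forall>x\<in>X. r``{x} = X"
    proof
      fix x assume "x \<in> X"
      then have ax: "(a,x) \<in> r" using a by auto
      show "r``{x} = X" using equiv_class_eq[OF eq ax] a by simp
    qed
    then have "(\<Sum>x\<in>X. 1 / real (card (r``{x}))) = (\<Sum>x\<in>X. 1 / real (card X))"
      by (intro sum.cong) auto
    also have "\<dots> = 1"
    proof -
      have "a \<in> X" using a equiv_class_self[OF eq a(1)] by simp
      then have "card X \<noteq> 0" using finX X by auto
      moreover have "(\<Sum>x\<in>X. 1 / real (card X)) = of_nat (card X) * (1 / real (card X))"
        by (rule sum_constant)
      ultimately show ?thesis by simp
    qed
    finally show "(\<Sum>x\<in>X. 1 / real (card (r``{x}))) = 1" .
  qed
  also have "\<dots> = real (card (A // r))" by simp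
  finally show ?thesis by simp
qed

lemma card_fibers:
  assumes "finite A" and "\<And>y. y \<in> f ` A \<Longrightarrow> card {x\<in>A. f x = y} = k"
  shows "card A = k * card (f ` A)"
proof -
  have "A = (\<Union>y\<in>f ` A. {x\<in>A. f x = y})" by auto
  then have "card A = card (\<Union>y\<in>f ` A. {x\<in>A. f x = y})" by simp
  also have "\<dots> = (\<Sum>y\<in>f ` A. card {x\<in>A. f x = y})"
    by (rule card_UN_disjoint) (use assms(1) in auto)
  also have "\<dots> = (\<Sum>y\<in>f ` A. k)" using assms(2) by simp
  finally show ?thesis by simp
qed

definition Sq :: "'a::field set" where "Sq = {x. x \<noteq> 0 \<and> sq x}"

lemma sq_iff: "sq x \<longleftrightarrow> (\<exists>t. x = t^2)" by (simp add: sq_def)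

lemma sq_sq[simp]: "sq (t^2)" by (auto simp: sq_def)

lemma sq_one[simp]: "sq 1"
  using sq_sq[of 1] by simp

lemma sq_cancel: "sq (a*b) \<Longrightarrow> sq a \<Longrightarrow> a \<noteq> 0 \<Longrightarrow> sq (b::'a::field)"
proof -
  assume "sq (a*b)" "sq a" "a \<noteq> 0"
  then have "sq ((a*b) * (1/a))" using sq_mult sq_inv by blast
  then show "sq b" using \<open>a \<noteq> 0\<close> by simp
qed

lemma neg_ne: fixes x :: "'a::field" assumes two: "(2::'a) \<noteq> 0" and "x \<noteq> 0" shows "x \<noteq> -x"
proof
  assume "x = -x" then have "2*x = 0" by (metis add_eq_0_iff mult_2)
  then show False using assms by simp
qed

lemma sq_card:
  fixes dummy :: "'a::{finite,field}"
  assumes two: "(2::'a) \<noteq> 0"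
  shows "card (UNIV::'a set) = 2 * card (Sq::'a set) + 1"
proof -
  let ?A = "UNIV - {0::'a}"
  have img: "(\<lambda>x. x^2) ` ?A = Sq" unfolding Sq_def by (auto simp: sq_def)
  have "card ?A = 2 * card ((\<lambda>x. x^2) ` ?A)"
  proof (rule card_fibers)
    fix y assume "y \<in> (\<lambda>x::'a. x^2) ` ?A"
    then obtain a where a: "a \<noteq> 0" "y = a^2" by auto
    have "{x \<in> ?A. x^2 = y} = {a, -a}" using a by (auto simp: power2_eq_iff)
    then show "card {x \<in> ?A. x^2 = y} = 2" using neg_ne[OF two a(1)] by simp
  qed simp
  moreover have "card ?A = card (UNIV::'a set) - 1" by (simp add: card_Diff_singleton)
  moreover have "card (UNIV::'a set) \<ge> 1" by (simp add: Suc_leI finite_UNIV_card_ge_0)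
  ultimately show ?thesis using img by simp
qed

lemma index2:
  fixes x :: "'a::{finite,field}"
  assumes two: "(2::'a) \<noteq> 0" and nm: "\<not> sq (-1::'a)" and x: "x \<noteq> 0"
  shows "sq x \<or> sq (-x)"
proof (rule ccontr)
  assume c: "\<not> (sq x \<or> sq (-x))"
  let ?N = "(UNIV - {0}) - (Sq::'a set)"
  have cS: "card (UNIV::'a set) = 2 * card (Sq::'a set) + 1" using sq_card[OF two] .
  have SqU: "Sq \<subseteq> UNIV - {0::'a}" by (auto simp: Sq_def)
  have cN: "card ?N = card (Sq::'a set)"
  proof -
    have "card ?N = card (UNIV - {0::'a}) - card (Sq::'a set)" using SqU by (simp add: card_Diff_subset)
    moreover have "card (UNIV - {0::'a}) = card (UNIV::'a set) - 1" by (simp add: card_Diff_singleton)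
    ultimately show ?thesis using cS by simp
  qed
  have sub: "uminus ` Sq \<subseteq> ?N"
  proof
    fix y assume "y \<in> uminus ` (Sq::'a set)"
    then obtain s where s: "s \<in> Sq" "y = -s" by auto
    have "\<not> sq (-s)"
    proof
      assume "sq (-s)"
      then have "sq (s * (-1))" by simp
      then show False using sq_cancel[of s "-1"] s nm by (auto simp: Sq_def)
    qed
    then show "y \<in> ?N" using s by (auto simp: Sq_def)
  qed
  have "card (uminus ` (Sq::'a set)) = card (Sq::'a set)" by (rule card_image) (simp add: inj_on_def)
  then have "uminus ` Sq = ?N" using sub cN by (intro card_subset_eq) auto
  moreover have "x \<in> ?N" using c x by (auto simp: Sq_def)
  ultimately obtain s where "s \<in> Sq" "x = -s" by blast
  then show False using c by (auto simp: Sq_def)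
qed



lemma hyper:
  fixes dummy :: "'a::{finite,field}"
  assumes two: "(2::'a) \<noteq> 0"
  shows "4 * card {u::'a. u \<noteq> 0 \<and> u \<noteq> 1 \<and> sq u \<and> sq (u-1)} + 3 + (if sq(-1::'a) then 2 else 0)
    = card (UNIV::'a set)"
proof -
  define Q where "Q = {u::'a. u \<noteq> 0 \<and> u \<noteq> 1 \<and> sq u \<and> sq (u-1)}"
  define H0 where "H0 = {p::'a\<times>'a. (fst p)^2 - (snd p)^2 = 1}"
  define H where "H = {p \<in> H0. fst p \<noteq> 0 \<and> snd p \<noteq> 0}"
  define Z1 where "Z1 = {p \<in> H0. snd p = 0}"
  define Z2 where "Z2 = {p \<in> H0. fst p = 0}"
  define g where "g = (\<lambda>t::'a. ((t + 1/t)/2, (t - 1/t)/2))"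
  have gim: "g ` (UNIV - {0}) = H0"
  proof
    show "g ` (UNIV - {0}) \<subseteq> H0"
    proof
      fix p assume "p \<in> g ` (UNIV - {0})"
      then obtain t where t: "t \<noteq> 0" "p = g t" by auto
      have four: "(4::'a) \<noteq> 0" proof - have "(2::'a)*2 \<noteq> 0" using two by (simp only: mult_eq_0_iff) simp then show ?thesis by simp qed
      have six: "(16::'a) \<noteq> 0" proof - have "(4::'a)*4 \<noteq> 0" using four by (simp only: mult_eq_0_iff) simp then show ?thesis by simp qed
      have "((t + 1/t)/2)^2 - ((t - 1/t)/2)^2 = 1" using t two four six
        by (simp add: field_simps power2_eq_square)
      then show "p \<in> H0" using t by (simp add: H0_def g_def)
    qed
  next
    show "H0 \<subseteq> g ` (UNIV - {0})"
    proof
      fix p assume p: "p \<in> H0"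
      obtain y z where yz: "p = (y,z)" by (cases p)
      have e: "(y+z)*(y-z) = 1" using p yz by (simp add: H0_def power2_eq_square algebra_simps)
      then have t0: "y + z \<noteq> 0" by auto
      have i: "1/(y+z) = y - z" using e t0 by (simp add: field_simps)
      have "g (y+z) = (y,z)" unfolding g_def i using two by (simp add: field_simps)
      then show "p \<in> g ` (UNIV - {0})" using t0 yz by (metis DiffI UNIV_I image_eqI singletonD)
    qed
  qed
  have ginj: "inj_on g (UNIV - {0})"
  proof (rule inj_onI)
    fix s t assume "g s = g t"
    then have "fst (g s) + snd (g s) = fst (g t) + snd (g t)" by simp
    then show "s = t" using two by (simp add: g_def field_simps)
  qed
  have cH0: "card H0 = card (UNIV::'a set) - 1"
    using card_image[OF ginj] gim by (simp add: card_Diff_singleton)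
  have split: "H0 = H \<union> Z1 \<union> Z2" by (auto simp: H_def Z1_def Z2_def)
  have d1: "H \<inter> (Z1 \<union> Z2) = {}" by (auto simp: H_def Z1_def Z2_def)
  have d2: "Z1 \<inter> Z2 = {}" by (auto simp: H0_def Z1_def Z2_def)
  have cH0': "card H0 = card H + card Z1 + card Z2"
  proof -
    have "card H0 = card (H \<union> (Z1 \<union> Z2))" using split by (simp add: Un_assoc)
    also have "\<dots> = card H + card (Z1 \<union> Z2)" by (rule card_Un_disjoint) (use d1 in auto)
    also have "card (Z1 \<union> Z2) = card Z1 + card Z2" by (rule card_Un_disjoint) (use d2 in auto)
    finally show ?thesis by simp
  qed
  have cZ1: "card Z1 = 2"
  proof -
    have "Z1 = {(1,0),(-1,0)}" by (auto simp: Z1_def H0_def power2_eq_1_iff)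
    moreover have "(1::'a) \<noteq> -1" using neg_ne[OF two, of 1] by simp
    ultimately show ?thesis by simp
  qed
  have cZ2: "card Z2 = (if sq(-1::'a) then 2 else 0)"
  proof (cases "sq(-1::'a)")
    case True
    then obtain i :: 'a where i: "-1 = i^2" by (auto simp: sq_def)
    then have i0: "i \<noteq> 0" by (auto simp: power2_eq_square)
    have iff: "(0::'a)^2 - b^2 = 1 \<longleftrightarrow> b = i \<or> b = -i" for b
    proof -
      have "(0::'a)^2 - b^2 = 1 \<longleftrightarrow> b^2 = -1" by (simp add: minus_equation_iff) (rule eq_commute)
      also have "\<dots> \<longleftrightarrow> b^2 = i^2" using i by simp
      finally have "(0::'a)^2 - b^2 = 1 \<longleftrightarrow> b^2 = i^2" .
      then show ?thesis by (simp add: power2_eq_iff)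
    qed
    have mem: "(a,b) \<in> Z2 \<longleftrightarrow> a = 0 \<and> (b = i \<or> b = -i)" for a b
    proof -
      have "(a,b) \<in> Z2 \<longleftrightarrow> a = 0 \<and> (0::'a)^2 - b^2 = 1" by (auto simp: Z2_def H0_def)
      then show ?thesis using iff[of b] by blast
    qed
    have "Z2 = {(0,i),(0,-i)}"
    proof (rule set_eqI)
      fix p :: "'a \<times> 'a" obtain a b where p: "p = (a,b)" by (cases p)
      show "p \<in> Z2 \<longleftrightarrow> p \<in> {(0,i),(0,-i)}" unfolding p mem by auto
    qed
    then show ?thesis using True neg_ne[OF two i0] by simp
  next
    case False
    have "Z2 = {}"
    proof (rule ccontr)
      assume "Z2 \<noteq> {}"
      then obtain z where "(0::'a)^2 - z^2 = 1" by (auto simp: Z2_def H0_def)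
      then have "-1 = z^2" by (simp add: minus_equation_iff)
      then show False using False by (auto simp: sq_def)
    qed
    then show ?thesis using False by simp
  qed
  have fim: "(\<lambda>p. (fst p)^2) ` H = Q"
  proof
    show "(\<lambda>p. (fst p)^2) ` H \<subseteq> Q"
    proof
      fix u assume "u \<in> (\<lambda>p. (fst p)^2) ` H"
      then obtain y z where p: "(y,z) \<in> H" "u = y^2" by auto
      then have e: "y^2 - z^2 = 1" "y \<noteq> 0" "z \<noteq> 0" by (auto simp: H_def H0_def)
      have "u - 1 = z^2" using e p by (simp add: algebra_simps)
      then show "u \<in> Q" using e p by (auto simp: Q_def)
    qed
  next
    show "Q \<subseteq> (\<lambda>p. (fst p)^2) ` H"
    proof
      fix u assume "u \<in> Q"
      then obtain y z where yz: "u = y^2" "u - 1 = z^2" "u \<noteq> 0" "u \<noteq> 1" by (auto simp: Q_def sq_def)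
      have zz: "z^2 = y^2 - 1" using yz by simp
      have "y^2 - z^2 = 1" unfolding zz by simp
      moreover have "y \<noteq> 0" "z \<noteq> 0" using yz by auto
      ultimately have "(y,z) \<in> H" "u = (fst (y,z))^2" using yz by (auto simp: H_def H0_def)
      then show "u \<in> (\<lambda>p. (fst p)^2) ` H" by blast
    qed
  qed
  have finH: "finite H" by simp
  have cH: "card H = 4 * card Q"
    unfolding fim[symmetric]
  proof (rule card_fibers[OF finH])
    fix w assume "w \<in> (\<lambda>p. (fst p)^2) ` H"
    then obtain y z where p: "(y,z) \<in> H" "w = y^2" by auto
    then have e: "y^2 - z^2 = 1" "y \<noteq> 0" "z \<noteq> 0" by (auto simp: H_def H0_def)
    have "{p \<in> H. (fst p)^2 = w} = {(y,z),(-y,z),(y,-z),(-y,-z)}"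
    proof
      show "{p \<in> H. (fst p)^2 = w} \<subseteq> {(y,z),(-y,z),(y,-z),(-y,-z)}"
      proof
        fix p assume pp: "p \<in> {p \<in> H. (fst p)^2 = w}"
        obtain a b where ab: "p = (a,b)" by (cases p)
        have "a^2 = y^2" "a^2 - b^2 = 1" using pp ab p by (auto simp: H_def H0_def)
        then have "a = y \<or> a = -y" "b^2 = z^2" using e by (auto simp: power2_eq_iff algebra_simps)
        then have "a = y \<or> a = -y" "b = z \<or> b = -z" by (auto simp: power2_eq_iff)
        then show "p \<in> {(y,z),(-y,z),(y,-z),(-y,-z)}" using ab by auto
      qed
    next
      show "{(y,z),(-y,z),(y,-z),(-y,-z)} \<subseteq> {p \<in> H. (fst p)^2 = w}"
        using e p by (auto simp: H_def H0_def)
    qed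
    moreover have "y \<noteq> -y" "z \<noteq> -z" using neg_ne[OF two] e by auto
    ultimately show "card {p \<in> H. (fst p)^2 = w} = 4" by auto
  qed
  have "card (UNIV::'a set) \<ge> 1" by (simp add: Suc_leI finite_UNIV_card_ge_0)
  then show ?thesis using cH0 cH0' cZ1 cZ2 cH unfolding Q_def by auto
qed



definition vals :: "'a::field \<Rightarrow> nat \<Rightarrow> 'a" where
  "vals u i = [u, 1-u, 1/u, (u-1)/u, 1/(1-u), u/(u-1)] ! i"
definition conds :: "'a::field \<Rightarrow> nat \<Rightarrow> bool" where
  "conds u i = [True, sq (-1::'a), sq u, sq (-u), sq (u-1), sq (1-u)] ! i"
definition kk :: "'a::field \<Rightarrow> nat" where
  "kk u = card {i. i < 6 \<and> conds u i}"

lemma less6: "(i::nat) < 6 \<longleftrightarrow> i=0 \<or> i=1 \<or> i=2 \<or> i=3 \<or> i=4 \<or> i=5" by auto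

lemma ex6: "(\<exists>i::nat. i<6 \<and> P i) \<longleftrightarrow> P 0 \<or> P 1 \<or> P 2 \<or> P 3 \<or> P 4 \<or> P 5"
  unfolding less6 by blast

lemma Cl_vals: "Cl u = vals u ` {i. i < 6 \<and> conds u i}"
proof (rule set_eqI)
  fix v
  have "v \<in> vals u ` {i. i < 6 \<and> conds u i} \<longleftrightarrow> (\<exists>i::nat. i<6 \<and> (conds u i \<and> v = vals u i))" by blast
  also have "\<dots> \<longleftrightarrow> v \<in> Cl u" unfolding ex6 by (simp add: vals_def conds_def Cl_def)
  finally show "v \<in> Cl u \<longleftrightarrow> v \<in> vals u ` {i. i < 6 \<and> conds u i}" by simp
qed

lemma cardS: "card {i::nat. i < Suc n \<and> P i} = card {i. i < n \<and> P i} + (if P n then 1 else 0)"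
proof -
  have e: "{i::nat. i < Suc n \<and> P i} = {i. i < n \<and> P i} \<union> (if P n then {n} else {})" by (auto simp: less_Suc_eq)
  show ?thesis unfolding e by (subst card_Un_disjoint) auto
qed

lemma cardN: "card {i::nat. i < numeral k \<and> P i} = card {i. i < pred_numeral k \<and> P i} + (if P (pred_numeral k) then 1 else 0)"
  using cardS[of "pred_numeral k" P] by (simp add: numeral_eq_Suc)

lemma card6: "card {i::nat. i < 6 \<and> P i} = (if P 0 then 1 else 0) + (if P 1 then 1 else 0) + (if P 2 then 1 else 0)
   + (if P 3 then 1 else 0) + (if P 4 then 1 else 0) + (if P 5 then 1 else 0)"
proof -
  have c1: "card {i::nat. i = 0 \<and> P i} = (if P 0 then 1 else 0)"
  proof -
    have "{i::nat. i = 0 \<and> P i} = (if P 0 then {0} else {})" by auto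
    then show ?thesis by simp
  qed
  show ?thesis by (simp add: cardN c1)
qed

lemma vals_inj:
  fixes u :: "'a::field"
  assumes two: "(2::'a) \<noteq> 0" and u: "u \<noteq> 0" "u \<noteq> 1" "u \<noteq> -1" "u \<noteq> 2" "2*u \<noteq> 1" "u^2 - u + 1 \<noteq> 0"
  shows "inj_on (vals u) {..<6}"
proof (rule inj_onI)
  fix i j assume ij: "i \<in> {..<6}" "j \<in> {..<6}" "vals u i = vals u j"
  have u1: "1 - u \<noteq> 0" "u - 1 \<noteq> 0" using u by auto
  have uu: "u * u \<noteq> 1" using u power2_eq_1_iff[of u] by (auto simp: power2_eq_square)
  show "i = j" using ij u u1 uu unfolding lessThan_iff less6 vals_def
    by (auto simp: field_simps power2_eq_square)
qed

lemma sq_neg_iff: "sq (-1::'a::field) \<Longrightarrow> sq (-x) \<longleftrightarrow> sq (x::'a)"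
proof
  assume m: "sq (-1::'a)"
  { assume "sq (-x)" then have "sq ((-1) * (-x))" using m sq_mult by blast then show "sq x" by simp }
  { assume "sq x" then have "sq ((-1) * x)" using m sq_mult by blast then show "sq (-x)" by simp }
qed

lemma not_both: fixes x :: "'a::field" shows "\<not> sq (-1::'a) \<Longrightarrow> x \<noteq> 0 \<Longrightarrow> sq x \<Longrightarrow> \<not> sq (-x)"
proof
  assume "\<not> sq (-1::'a)" "x \<noteq> 0" "sq x" "sq (-x)"
  then have "sq (x * (-1))" by simp
  then show False using sq_cancel[of x "-1"] \<open>sq x\<close> \<open>x \<noteq> 0\<close> \<open>\<not> sq (-1)\<close> by blast
qed

lemma kk_nonsq:
  fixes u :: "'a::{finite,field}"
  assumes two: "(2::'a) \<noteq> 0" and nm: "\<not> sq (-1::'a)" and u: "u \<noteq> 0" "u \<noteq> 1"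
  shows "kk u = 3"
proof -
  have a: "sq u \<longleftrightarrow> \<not> sq (-u)" using index2[OF two nm u(1)] not_both[OF nm u(1)] by blast
  have u1: "u - 1 \<noteq> 0" using u by simp
  have b: "sq (u-1) \<longleftrightarrow> \<not> sq (1-u)" using index2[OF two nm u1] not_both[OF nm u1] by auto
  show ?thesis unfolding kk_def card6 conds_def using a b nm by auto
qed

lemma kk_sq:
  fixes u :: "'a::field"
  assumes m: "sq (-1::'a)"
  shows "kk u = 2 + (if sq u then 2 else 0) + (if sq (u-1) then 2 else 0)"
proof -
  have a: "sq (-u) \<longleftrightarrow> sq u" by (rule sq_neg_iff[OF m])
  have b: "sq (1-u) \<longleftrightarrow> sq (u-1)" using sq_neg_iff[OF m, of "u-1"] by simp
  show ?thesis unfolding kk_def card6 conds_def using a b m by auto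
qed

lemma card_Cl_generic:
  fixes u :: "'a::field"
  assumes two: "(2::'a) \<noteq> 0" and u: "u \<noteq> 0" "u \<noteq> 1" "u \<noteq> -1" "u \<noteq> 2" "2*u \<noteq> 1" "u^2 - u + 1 \<noteq> 0"
  shows "card (Cl u) = kk u"
proof -
  have "inj_on (vals u) {i. i < 6 \<and> conds u i}"
    by (rule inj_on_subset[OF vals_inj[OF two u]]) auto
  then show ?thesis unfolding Cl_vals kk_def by (rule card_image)
qed

lemma root_facts:
  fixes u :: "'a::field"
  assumes r: "u^2 - u + 1 = 0"
  shows "u \<noteq> 0" "u \<noteq> 1" "1/u = 1-u" "(u-1)/u = u" "1/(1-u) = u" "u/(u-1) = 1-u"
    "sq (-u)" "sq (u-1)" "sq u \<longleftrightarrow> sq (-1::'a)" "sq (1-u) \<longleftrightarrow> sq (-1::'a)"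
proof -
  show u0: "u \<noteq> 0" using r by auto
  show u1: "u \<noteq> 1" using r by auto
  have uu: "u*u = u - 1" using r by (simp add: power2_eq_square algebra_simps)
  have u1': "1 - u \<noteq> 0" "u - 1 \<noteq> 0" using u1 by auto
  show i1: "1/u = 1-u" using u0 uu by (simp add: field_simps)
  show "(u-1)/u = u" using u0 uu by (simp add: field_simps)
  show i3: "1/(1-u) = u" using u1' uu by (simp add: field_simps)
  show "u/(u-1) = 1-u" using u1' u0 uu by (simp add: field_simps)
  have "(u^2)^2 = -u"
  proof -
    have "(u^2)^2 = (u*u)*(u*u)" by (simp add: power2_eq_square)
    also have "\<dots> = (u-1)*(u-1)" by (simp add: uu)
    also have "\<dots> = u*u - 2*u + 1" by (simp add: algebra_simps)
    also have "\<dots> = -u" by (simp add: uu)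
    finally show ?thesis .
  qed
  then show nu: "sq (-u)" by (metis sq_sq)
  show "sq (u-1)" using uu[symmetric] by (metis power2_eq_square sq_sq)
  show su: "sq u \<longleftrightarrow> sq (-1::'a)"
  proof
    assume "sq u" then show "sq (-1::'a)" using not_both[OF _ u0] nu by blast
  next
    assume "sq (-1::'a)" then show "sq u" using sq_neg_iff nu by blast
  qed
  show "sq (1-u) \<longleftrightarrow> sq (-1::'a)"
  proof -
    have "sq (1-u) \<longleftrightarrow> sq u"
    proof
      assume "sq (1-u)" then have "sq (1/(1-u))" by (rule sq_inv) then show "sq u" using i3 by simp
    next
      assume "sq u" then have "sq (1/u)" by (rule sq_inv) then show "sq (1-u)" using i1 by simp
    qed
    then show ?thesis using su by simp
  qed
qed

lemma Cl_root:
  fixes u :: "'a::field"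
  assumes r: "u^2 - u + 1 = 0"
  shows "Cl u = (if sq (-1::'a) then {u, 1-u} else {u})"
  using root_facts[OF r] unfolding Cl_def by auto

lemma kk_root:
  fixes u :: "'a::field"
  assumes r: "u^2 - u + 1 = 0"
  shows "kk u = (if sq (-1::'a) then 6 else 3)"
  using root_facts[OF r] unfolding kk_def card6 conds_def by auto

lemma sq_inv_iff: "x \<noteq> 0 \<Longrightarrow> sq (1/x) \<longleftrightarrow> sq (x::'a::field)"
  using sq_inv[of x] sq_inv[of "1/x"] by auto

lemma T_facts:
  fixes dummy :: "'a::field"
  assumes two: "(2::'a) \<noteq> 0" and three: "(3::'a) \<noteq> 0"
  defines "P \<equiv> sq (2::'a) \<or> sq (-2::'a)"
  shows "Cl (-1::'a) = (if P then {-1,2,1/2} else {-1,2})"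
    "Cl (2::'a) = (if P then {-1,2,1/2} else {-1,2})"
    "Cl (1/2::'a) = (if P then {-1,2,1/2} else {1/2})"
    "(-1::'a) \<noteq> 2" "(2::'a) \<noteq> 1/2" "(-1::'a) \<noteq> 1/2"
    "sq (-1::'a) \<Longrightarrow> kk (-1::'a) = (if P then 6 else 4)"
    "sq (-1::'a) \<Longrightarrow> kk (2::'a) = (if P then 6 else 4)"
    "sq (-1::'a) \<Longrightarrow> kk (1/2::'a) = (if P then 6 else 2)"
proof -
  have h1: "(1::'a) - 1/2 = 1/2" "1/(1/2) = (2::'a)" "((1/2::'a) - 1)/(1/2) = -1" "1/(1 - 1/2) = (2::'a)"
    "(1/2::'a)/(1/2 - 1) = -1" "(1/2::'a) - 1 = -(1/2)" using two by (simp_all add: field_simps)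
  have h2: "sq (1/2::'a) \<longleftrightarrow> sq (2::'a)" "sq (-(1/2)::'a) \<longleftrightarrow> sq (-2::'a)"
    using sq_inv_iff[of "2::'a"] sq_inv_iff[of "-2::'a"] two by auto
  have h3: "(-1::'a) - 1 = -2" "(1::'a) - (-1) = 2" "(-1::'a)/(-2) = 1/2" "((-2)::'a)/(-1) = 2" "(2::'a) - 1 = 1" "(1::'a) - 2 = -1"
    "(1::'a)/(-1) = -1"
    by (simp_all add: field_simps)
  show d1: "(-1::'a) \<noteq> 2"
  proof assume "(-1::'a) = 2" then have "(3::'a) = 0" by (simp add: algebra_simps eq_neg_iff_add_eq_0) then show False using three by simp qed
  show d2: "(2::'a) \<noteq> 1/2"
  proof assume "(2::'a) = 1/2" then have "(2::'a) * 2 = 1" using two by (simp add: field_simps)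
    then have f: "(4::'a) = 1" by simp
    have "(3::'a) = 4 - 1" by simp
    then have "(3::'a) = 0" using f by simp then show False using three by simp qed
  show d3: "(-1::'a) \<noteq> 1/2"
  proof assume "(-1::'a) = 1/2" then have "(-1::'a) * 2 = 1" using two by (simp add: field_simps)
    then have "(3::'a) = 0" by (simp add: algebra_simps eq_neg_iff_add_eq_0) then show False using three by simp qed
  show "Cl (-1::'a) = (if P then {-1,2,1/2} else {-1,2})"
    unfolding Cl_def P_def using h3 by auto
  show "Cl (2::'a) = (if P then {-1,2,1/2} else {-1,2})"
    unfolding Cl_def P_def using h3 by auto
  define h where "h = (1/2::'a)"
  have hf: "1 - h = h" "h - 1 = -h" "1/h = 2" "h \<noteq> 0" "sq h \<longleftrightarrow> sq (2::'a)" "sq (-h) \<longleftrightarrow> sq (-2::'a)"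
    using h1 h2 two unfolding h_def by auto
  have hf2: "(-h)/h = -1" "h/(-h) = -1" using hf(4) by simp_all
  have "Cl h = (if P then {-1,2,h} else {h})"
    unfolding Cl_def hf(1) hf(2) hf2 hf(3) hf(5) hf(6) P_def by auto
  then show "Cl (1/2::'a) = (if P then {-1,2,1/2} else {1/2})" unfolding h_def .
  have "sq (-1::'a) \<Longrightarrow> kk h = (if P then 6 else 2)"
    unfolding kk_sq hf(2) hf(5) hf(6) P_def using sq_neg_iff[of 2] by auto
  then show "sq (-1::'a) \<Longrightarrow> kk (1/2::'a) = (if P then 6 else 2)" unfolding h_def .
  show "sq (-1::'a) \<Longrightarrow> kk (-1::'a) = (if P then 6 else 4)"
    unfolding kk_sq P_def using h3 sq_neg_iff[of 2] by auto
  show "sq (-1::'a) \<Longrightarrow> kk (2::'a) = (if P then 6 else 4)"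
    unfolding kk_sq P_def using h3 sq_neg_iff[of 2] by auto
qed



lemma IL_sum:
  fixes dummy :: "'a::{finite,field}"
  assumes two: "(2::'a) \<noteq> 0"
  shows "real (I_L TYPE('a)) = (\<Sum>u\<in>UNIV-{0,1::'a}. 1 / real (card (Cl u)))"
proof -
  have "real (I_L TYPE('a)) = real (card ((UNIV - {0,1::'a}) // affrel))"
    unfolding I_L_def rel_eq[OF two] ..
  also have "\<dots> = (\<Sum>u\<in>UNIV-{0,1::'a}. 1 / real (card (affrel``{u})))"
    by (rule card_quotient_sum[OF _ affrel_equiv]) simp
  also have "\<dots> = (\<Sum>u\<in>UNIV-{0,1::'a}. 1 / real (card (Cl u)))"
    by (rule sum.cong) (auto simp: affrel_class)
  finally show ?thesis .
qed

lemma split_sum: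
  fixes S E :: "'a set" and f g :: "'a \<Rightarrow> nat"
  assumes "finite S" "E \<subseteq> S" "\<And>u. u \<in> S - E \<Longrightarrow> f u = g u"
  shows "(\<Sum>u\<in>S. 1 / real (f u)) = (\<Sum>u\<in>S. 1 / real (g u)) + (\<Sum>u\<in>E. 1 / real (f u) - 1 / real (g u))"
proof -
  have "(\<Sum>u\<in>S. 1 / real (f u)) = (\<Sum>u\<in>S. 1 / real (g u)) + (\<Sum>u\<in>S. 1 / real (f u) - 1 / real (g u))"
    by (simp add: sum_subtractf)
  also have "(\<Sum>u\<in>S. 1 / real (f u) - 1 / real (g u)) = (\<Sum>u\<in>E. 1 / real (f u) - 1 / real (g u))"
    by (rule sum.mono_neutral_right) (use assms in auto)
  finally show ?thesis .
qed

lemma sum_ind: "finite A \<Longrightarrow> (\<Sum>x\<in>A. if P x then (c::real) else 0) = c * real (card {x\<in>A. P x})"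
  by (simp add: sum.inter_filter[symmetric])

lemma sum_kk_nonsq:
  fixes dummy :: "'a::{finite,field}"
  assumes two: "(2::'a) \<noteq> 0" and nm: "\<not> sq (-1::'a)"
  shows "(\<Sum>u\<in>UNIV-{0,1::'a}. 1 / real (kk u)) = (real (card (UNIV::'a set)) - 2) / 3"
proof -
  have "(\<Sum>u\<in>UNIV-{0,1::'a}. 1 / real (kk u)) = (\<Sum>u\<in>UNIV-{0,1::'a}. 1/3)"
    by (rule sum.cong) (auto simp: kk_nonsq[OF two nm])
  also have "\<dots> = real (card (UNIV-{0,1::'a})) / 3" by simp
  also have "card (UNIV-{0,1::'a}) = card (UNIV::'a set) - 2"
    by (subst card_Diff_subset) auto
  also have "card (UNIV::'a set) \<ge> 2"
  proof -
    have "card {0,1::'a} \<le> card (UNIV::'a set)" by (rule card_mono) auto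
    then show ?thesis by simp
  qed
  then have "real (card (UNIV::'a set) - 2) = real (card (UNIV::'a set)) - 2" by simp
  finally show ?thesis .
qed

lemma sum_kk_sq:
  fixes dummy :: "'a::{finite,field}"
  assumes two: "(2::'a) \<noteq> 0" and m: "sq (-1::'a)"
  shows "(\<Sum>u\<in>UNIV-{0,1::'a}. 1 / real (kk u)) = (7 * real (card (UNIV::'a set)) - 11) / 24"
proof -
  let ?S = "UNIV-{0,1::'a}"
  let ?q = "card (UNIV::'a set)"
  have fS: "finite ?S" by simp
  have "(\<Sum>u\<in>?S. 1 / real (kk u)) = (\<Sum>u\<in>?S. 1/2 - (if sq u then 1/4 else 0) - (if sq (u-1) then 1/4 else 0)
        + (if sq u \<and> sq (u-1) then 1/6 else 0))"
    by (rule sum.cong) (auto simp: kk_sq[OF m])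
  also have "\<dots> = real (card ?S) / 2 - 1/4 * real (card {u\<in>?S. sq u}) - 1/4 * real (card {u\<in>?S. sq (u-1)})
       + 1/6 * real (card {u\<in>?S. sq u \<and> sq (u-1)})"
    by (simp add: sum.distrib sum_subtractf sum_ind[OF fS])
  finally have e1: "(\<Sum>u\<in>?S. 1 / real (kk u)) = real (card ?S) / 2 - 1/4 * real (card {u\<in>?S. sq u}) - 1/4 * real (card {u\<in>?S. sq (u-1)})
       + 1/6 * real (card {u\<in>?S. sq u \<and> sq (u-1)})" .
  have cS: "?q = 2 * card (Sq::'a set) + 1" by (rule sq_card[OF two])
  have hy: "4 * card {u::'a. u \<noteq> 0 \<and> u \<noteq> 1 \<and> sq u \<and> sq (u-1)} + 3 + 2 = ?q"
    using hyper[OF two] m by simp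
  have c1: "card ?S = ?q - 2" by (subst card_Diff_subset) auto
  have a1: "{u\<in>?S. sq u} = Sq - {1}" by (auto simp: Sq_def)
  have one: "(1::'a) \<in> Sq" by (simp add: Sq_def)
  have ca: "card {u\<in>?S. sq u} = card (Sq::'a set) - 1" unfolding a1 using one by (simp add: card_Diff_singleton)
  have b1: "{u\<in>?S. sq (u-1)} = (\<lambda>w. w+1) ` (Sq - {-1})"
  proof
    show "{u\<in>?S. sq (u-1)} \<subseteq> (\<lambda>w. w+1) ` (Sq - {-1})"
    proof
      fix u assume u: "u \<in> {u\<in>?S. sq (u-1)}"
      then have "u - 1 \<in> Sq - {-1}" by (auto simp: Sq_def)
      moreover have "u = (u-1) + 1" by simp
      ultimately show "u \<in> (\<lambda>w. w+1) ` (Sq - {-1})" by blast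
    qed
  next
    have ne: "x \<noteq> -1 \<Longrightarrow> x + 1 \<noteq> 0" for x :: 'a using eq_neg_iff_add_eq_0[of x 1] by simp
    show "(\<lambda>w. w+1) ` (Sq - {-1}) \<subseteq> {u\<in>?S. sq (u-1)}"
      using ne by (auto simp: Sq_def)
  qed
  have mone: "(-1::'a) \<in> Sq" using m by (simp add: Sq_def)
  have cb: "card {u\<in>?S. sq (u-1)} = card (Sq::'a set) - 1"
    unfolding b1 by (subst card_image) (auto simp: inj_on_def card_Diff_singleton mone)
  have c2: "{u\<in>?S. sq u \<and> sq (u-1)} = {u::'a. u \<noteq> 0 \<and> u \<noteq> 1 \<and> sq u \<and> sq (u-1)}" by auto
  have sq1: "card (Sq::'a set) \<ge> 1" using one by (metis card_0_eq empty_iff finite less_one not_le)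
  define s where "s = real (card (Sq::'a set))"
  have ra: "real (card {u\<in>?S. sq u}) = s - 1" using ca sq1 by (simp add: s_def of_nat_diff)
  have rb: "real (card {u\<in>?S. sq (u-1)}) = s - 1" using cb sq1 by (simp add: s_def of_nat_diff)
  have rq: "real ?q = 2*s + 1" using cS by (simp add: s_def)
  have rS: "real (card ?S) = 2*s - 1" using c1 cS sq1 by (simp add: s_def of_nat_diff)
  have rc: "real (card {u\<in>?S. sq u \<and> sq (u-1)}) = (2*s - 4)/4"
  proof -
    have "4 * real (card {u::'a. u \<noteq> 0 \<and> u \<noteq> 1 \<and> sq u \<and> sq (u-1)}) + 5 = real ?q"
    proof -
      have h': "4 * card {u::'a. u \<noteq> 0 \<and> u \<noteq> 1 \<and> sq u \<and> sq (u-1)} + 5 = ?q" using hy by simp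
      show ?thesis using arg_cong[OF h', of real] by simp
    qed
    then show ?thesis unfolding c2 rq by simp
  qed
  show ?thesis unfolding e1 ra rb rS rc rq by (simp add: field_simps)
qed

lemma root_ne_half:
  fixes w :: "'a::field"
  assumes three: "(3::'a) \<noteq> 0" and r: "w^2 - w + 1 = 0"
  shows "2*w \<noteq> 1"
proof
  assume h: "2*w = 1"
  have "4*(w^2 - w + 1) = (2*w)^2 - 2*(2*w) + 4" by (simp add: algebra_simps power2_eq_square)
  also have "\<dots> = 3" unfolding h by simp
  finally show False using r three by simp
qed

lemma R_struct:
  fixes dummy :: "'a::field"
  assumes three: "(3::'a) \<noteq> 0"
  shows "{u::'a. u^2 - u + 1 = 0} = {} \<or> (\<exists>w. {u::'a. u^2 - u + 1 = 0} = {w, 1-w} \<and> w \<noteq> 1-w)"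
proof (cases "{u::'a. u^2 - u + 1 = 0} = {}")
  case False
  then obtain w :: 'a where w: "w^2 - w + 1 = 0" by auto
  have "{u::'a. u^2 - u + 1 = 0} = {w, 1-w}"
  proof (rule set_eqI)
    fix x :: 'a
    have "x^2 - x + 1 = (x - w)*(x - (1-w)) + (w^2 - w + 1)" by (simp add: algebra_simps power2_eq_square)
    then have "x^2 - x + 1 = 0 \<longleftrightarrow> (x - w)*(x - (1-w)) = 0" using w by simp
    then show "x \<in> {u::'a. u^2 - u + 1 = 0} \<longleftrightarrow> x \<in> {w, 1-w}" by auto
  qed
  moreover have "w \<noteq> 1 - w" using root_ne_half[OF three w] by (auto simp: algebra_simps mult_2)
  ultimately show ?thesis by blast
qed simp

lemma R_char3:
  fixes dummy :: "'a::field"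
  assumes three: "(3::'a) = 0"
  shows "{u::'a. u^2 - u + 1 = 0} = {-1}"
proof (rule set_eqI)
  fix x :: 'a
  have "x^2 - x + 1 = (x+1)^2 - 3*x" by (simp add: algebra_simps power2_eq_square)
  then have "x^2 - x + 1 = (x+1)^2" using three by simp
  then show "x \<in> {u::'a. u^2 - u + 1 = 0} \<longleftrightarrow> x \<in> {-1}" by (simp add: eq_neg_iff_add_eq_0)
qed

definition FF :: "'a::field \<Rightarrow> real" where "FF u = 1 / real (card (Cl u)) - 1 / real (kk u)"

lemma FF_root:
  fixes u :: "'a::field"
  assumes r: "u^2 - u + 1 = 0" and h: "2*u \<noteq> 1"
  shows "FF u = (if sq (-1::'a) then 1/3 else 2/3)"
proof -
  have "u \<noteq> 1 - u" using h by (auto simp: algebra_simps mult_2)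
  then show ?thesis unfolding FF_def Cl_root[OF r] kk_root[OF r] by simp
qed

lemma FF_root3:
  fixes u :: "'a::field"
  assumes three: "(3::'a) = 0"
  shows "FF (-1::'a) = (if sq (-1::'a) then 5/6 else 2/3)"
proof -
  have r: "(-1::'a)^2 - (-1) + 1 = 0" using three by simp
  have t: "(2::'a) = -1" using three by (simp add: eq_neg_iff_add_eq_0) 
  show ?thesis unfolding FF_def Cl_root[OF r] kk_root[OF r] by (simp add: t)
qed

lemma count_ne3:
  fixes dummy :: "'a::{finite,field}"
  assumes two: "(2::'a) \<noteq> 0" and three: "(3::'a) \<noteq> 0"
  shows "(\<not> sq (-1::'a) \<longrightarrow> (3 * I_L TYPE('a) + 2 = card (UNIV::'a set) \<or> 3 * I_L TYPE('a) = card (UNIV::'a set) + 2))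
    \<and> (sq (-1::'a) \<longrightarrow> (24 * I_L TYPE('a) = 7 * card (UNIV::'a set) + 1 \<or> 24 * I_L TYPE('a) = 7 * card (UNIV::'a set) + 17
         \<or> 24 * I_L TYPE('a) = 7 * card (UNIV::'a set) + 13 \<or> 24 * I_L TYPE('a) = 7 * card (UNIV::'a set) + 29))"
proof -
  define N where "N = I_L TYPE('a)"
  define q where "q = card (UNIV::'a set)"
  define S where "S = UNIV - {0,1::'a}"
  define R where "R = {u::'a. u^2 - u + 1 = 0}"
  define T where "T = {-1, 2, 1/2::'a}"
  define P where "P = (sq (2::'a) \<or> sq (-2::'a))"
  note TF = T_facts[OF two three, folded P_def]
  have m1: "(-1::'a) \<noteq> 0" "(-1::'a) \<noteq> 1" using neg_ne[OF two, of 1] by auto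
  have h21: "(2::'a) \<noteq> 1"
  proof assume "(2::'a) = 1" then have "(2::'a) - 1 = 0" by simp then show False by simp qed
  have h0: "(1/2::'a) \<noteq> 0" "(1/2::'a) \<noteq> 1" "(2::'a) \<noteq> 1" using two h21 by (auto simp: field_simps)
  have TS: "T \<subseteq> S" using two m1 h0 by (auto simp: T_def S_def)
  have RS: "R \<subseteq> S" using root_facts by (auto simp: R_def S_def)
  have TR: "T \<inter> R = {}"
  proof -
    have "(-1::'a)^2 - (-1) + 1 = 3" "(2::'a)^2 - 2 + 1 = 3" by (simp_all add: power2_eq_square)
    moreover have "(1/2::'a) \<notin> R" using root_ne_half[OF three, of "1/2"] two by (auto simp: R_def)
    ultimately show ?thesis using three by (auto simp: T_def R_def)
  qed
  have fS: "finite S" by simp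
  have gen: "card (Cl u) = kk u" if u: "u \<in> S - (T \<union> R)" for u
  proof -
    have a: "u \<noteq> 0" "u \<noteq> 1" "u \<noteq> -1" "u \<noteq> 2" "u \<noteq> 1/2" "u^2 - u + 1 \<noteq> 0"
      using u by (auto simp: S_def T_def R_def)
    have b: "2*u \<noteq> 1" using a(5) two by (auto simp: field_simps)
    show ?thesis by (rule card_Cl_generic[OF two a(1-4) b a(6)])
  qed
  have sumN: "real N = (\<Sum>u\<in>S. 1 / real (kk u)) + (\<Sum>u\<in>T \<union> R. FF u)"
    unfolding N_def IL_sum[OF two] S_def[symmetric] FF_def
    by (rule split_sum[OF fS]) (use TS RS gen in auto)
  have fT: "finite T" "finite R" by (auto simp: T_def)
  have sE: "(\<Sum>u\<in>T \<union> R. FF u) = (\<Sum>u\<in>T. FF u) + (\<Sum>u\<in>R. FF u)"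
    by (rule sum.union_disjoint[OF fT TR])
  have sT: "(\<Sum>u\<in>T. FF u) = FF (-1::'a) + FF (2::'a) + FF (1/2::'a)"
    unfolding T_def using TF(4-6) by (simp add: add.assoc)
  have sR: "(\<Sum>u\<in>R. FF u) = real (card R) * (if sq (-1::'a) then 1/3 else 2/3)"
  proof -
    have "(\<Sum>u\<in>R. FF u) = (\<Sum>u\<in>R. (if sq (-1::'a) then 1/3 else 2/3))"
    proof (rule sum.cong[OF refl])
      fix x assume "x \<in> R" then have r: "x^2 - x + 1 = 0" by (simp add: R_def)
      show "FF x = (if sq (-1::'a) then 1/3 else 2/3)" by (rule FF_root[OF r root_ne_half[OF three r]])
    qed
    then show ?thesis by simp
  qed
  have cR: "card R = 0 \<or> card R = 2"
    using R_struct[OF three] unfolding R_def[symmetric] by (auto simp: card_insert_if)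
  have c3: "card {-1, 2, 1/2::'a} = 3" "card {-1, 2::'a} = 2" using TF(4-6) by auto
  show ?thesis
  proof (intro conjI impI)
    assume nm: "\<not> sq (-1::'a)"
    have PP: "P" using index2[OF two nm two] by (simp add: P_def)
    have k: "kk (-1::'a) = 3" "kk (2::'a) = 3" "kk (1/2::'a) = 3"
      using kk_nonsq[OF two nm] m1 h0 two by auto
    have fz: "FF (-1::'a) = 0" "FF (2::'a) = 0" "FF (1/2::'a) = 0"
      unfolding FF_def k TF(1-3) using PP c3 by auto
    have "real N = (real q - 2)/3 + real (card R) * (2/3)"
      using sumN sE sT sR fz nm sum_kk_nonsq[OF two nm] by (simp add: S_def q_def)
    then have "3 * real N + 2 = real q + 2 * real (card R)" by (simp add: field_simps)
    then have "3 * N + 2 = q + 2 * card R" by (metis (mono_tags) of_nat_add of_nat_eq_iff of_nat_mult of_nat_numeral)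
    then show "3 * I_L TYPE('a) + 2 = card (UNIV::'a set) \<or> 3 * I_L TYPE('a) = card (UNIV::'a set) + 2"
      using cR by (auto simp: N_def q_def)
  next
    assume m: "sq (-1::'a)"
    have fT': "FF (-1::'a) + FF (2::'a) + FF (1/2::'a) = (if P then 1/2 else 1)"
      unfolding FF_def TF(1-3) TF(7-9)[OF m] using c3 TF(4-6) by auto
    have rN: "real N = (7 * real q - 11)/24 + (if P then 1/2 else 1) + real (card R) * (1/3)"
      using sumN sE sT sR fT' m sum_kk_sq[OF two m] by (simp add: S_def q_def)
    define cP :: nat where "cP = (if P then 1 else 13)"
    have "24 * real N = 7 * real q + real cP + 8 * real (card R)"
      using rN cP_def by (auto simp: field_simps split: if_splits)
    then have "real (24 * N) = real (7 * q + cP + 8 * card R)" by simp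
    then have "24 * N = 7 * q + cP + 8 * card R" by (simp only: of_nat_eq_iff)
    then show "24 * I_L TYPE('a) = 7 * card (UNIV::'a set) + 1 \<or> 24 * I_L TYPE('a) = 7 * card (UNIV::'a set) + 17
         \<or> 24 * I_L TYPE('a) = 7 * card (UNIV::'a set) + 13 \<or> 24 * I_L TYPE('a) = 7 * card (UNIV::'a set) + 29"
      using cR by (auto simp: N_def q_def cP_def split: if_splits)
  qed
qed

lemma count_3:
  fixes dummy :: "'a::{finite,field}"
  assumes two: "(2::'a) \<noteq> 0" and three: "(3::'a) = 0"
  shows "(\<not> sq (-1::'a) \<longrightarrow> 3 * I_L TYPE('a) = card (UNIV::'a set))
    \<and> (sq (-1::'a) \<longrightarrow> 24 * I_L TYPE('a) = 7 * card (UNIV::'a set) + 9)"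
proof -
  define N where "N = I_L TYPE('a)"
  define q where "q = card (UNIV::'a set)"
  define S where "S = UNIV - {0,1::'a}"
  have t: "(2::'a) = -1" using three by (simp add: eq_neg_iff_add_eq_0)
  have m1: "(-1::'a) \<noteq> 0" "(-1::'a) \<noteq> 1" using neg_ne[OF two, of 1] by auto
  have ES: "{-1::'a} \<subseteq> S" using m1 by (auto simp: S_def)
  have fS: "finite S" by simp
  have gen: "card (Cl u) = kk u" if u: "u \<in> S - {-1}" for u
  proof -
    have a: "u \<noteq> 0" "u \<noteq> 1" "u \<noteq> -1" using u by (auto simp: S_def)
    have b: "u \<noteq> 2" unfolding t using a(3) .
    have c: "2*u \<noteq> 1"
    proof
      assume "2*u = 1" then have "-u = 1" unfolding t by simp
      then show False using a(3) by (auto simp: minus_equation_iff)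
    qed
    have d: "u^2 - u + 1 \<noteq> 0" using R_char3[OF three] a(3) by blast
    show ?thesis by (rule card_Cl_generic[OF two a(1-3) b c d])
  qed
  have sumN: "real N = (\<Sum>u\<in>S. 1 / real (kk u)) + (\<Sum>u\<in>{-1::'a}. FF u)"
    unfolding N_def IL_sum[OF two] S_def[symmetric] FF_def
    using split_sum[OF fS ES, of "\<lambda>u. card (Cl u)" kk] gen by simp
  show ?thesis
  proof (intro conjI impI)
    assume nm: "\<not> sq (-1::'a)"
    have "real N = (real q - 2)/3 + 2/3"
      using sumN FF_root3[OF three] nm sum_kk_nonsq[OF two nm] by (simp add: S_def q_def)
    then have "real (3 * N) = real q" by (simp add: field_simps)
    then show "3 * I_L TYPE('a) = card (UNIV::'a set)" unfolding N_def q_def by (simp only: of_nat_eq_iff)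
  next
    assume m: "sq (-1::'a)"
    have "real N = (7 * real q - 11)/24 + 5/6"
      using sumN FF_root3[OF three] m sum_kk_sq[OF two m] by (simp add: S_def q_def)
    then have "real (24 * N) = real (7 * q + 9)" by (simp add: field_simps)
    then show "24 * I_L TYPE('a) = 7 * card (UNIV::'a set) + 9" unfolding N_def q_def by (simp only: of_nat_eq_iff)
  qed
qed

lemma q_mod4:
  fixes dummy :: "'a::{finite,field}"
  assumes two: "(2::'a) \<noteq> 0"
  shows "card (UNIV::'a set) mod 4 = (if sq (-1::'a) then 1 else 3)"
  using hyper[OF two] by (cases "sq (-1::'a)") (auto, presburger+)

lemma r12: "(r::nat) < 12 \<Longrightarrow> r = 0 \<or> r = 1 \<or> r = 2 \<or> r = 3 \<or> r = 4 \<or> r = 5 \<or> r = 6 \<or> r = 7 \<or> r = 8 \<or> r = 9 \<or> r = 10 \<or> r = 11"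
  by presburger
lemma crt: fixes q :: nat shows "q mod 12 = (if q mod 4 = 1 then (if q mod 3 = 0 then 9 else if q mod 3 = 1 then 1 else 5)
   else if q mod 4 = 3 then (if q mod 3 = 0 then 3 else if q mod 3 = 1 then 7 else 11) else q mod 12)"
proof -
  have a: "q mod 4 = (q mod 12) mod 4" "q mod 3 = (q mod 12) mod 3" by (simp_all add: mod_mod_cancel)
  have "q mod 12 < 12" by simp
  then show ?thesis unfolding a using r12[of "q mod 12"] by auto
qed
lemma m3: fixes q N c :: nat assumes "24*N = 7*q + c" shows "(q + c) mod 3 = 0"
proof -
  have "q + c = 3*(8*N - 2*q)" using assms by arith
  then show ?thesis by simp
qed
lemma m3b: fixes q N c :: nat assumes "3*N = q + c" shows "(q + c) mod 3 = 0"
  using assms by (metis mod_mult_self1_is_0)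

theorem mainTheorem5:
  fixes q :: nat
  assumes "q = card (UNIV :: ('a::{finite, field}) set)"
    and "CHAR('a) \<ge> 3"
  shows "(q mod 12 = 1 \<longrightarrow> I_L TYPE('a) = (7*q + 29) div 24)
       \<and> (q mod 12 \<in> {3, 7} \<longrightarrow> I_L TYPE('a) = (q + 2) div 3)
       \<and> (q mod 12 \<in> {5, 9} \<longrightarrow> I_L TYPE('a) = (7*q + 13) div 24)
       \<and> (q mod 12 = 11 \<longrightarrow> I_L TYPE('a) = (q - 2) div 3)"
proof -
  have two: "(2::'a) \<noteq> 0"
  proof
    assume "(2::'a) = 0"
    then have "of_nat 2 = (0::'a)" by simp
    then have "CHAR('a) dvd 2" by (simp only: of_nat_eq_0_iff_char_dvd)
    then show False using assms(2) by (auto dest: dvd_imp_le)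
  qed
  define N where "N = I_L TYPE('a)"
  have m4: "q mod 4 = (if sq (-1::'a) then 1 else 3)" using q_mod4[OF two] assms(1) by simp
  have C: "(\<not> sq (-1::'a) \<and> (3 * N + 2 = q \<or> 3 * N = q + 2 \<or> 3 * N = q))
     \<or> (sq (-1::'a) \<and> (24 * N = 7 * q + 1 \<or> 24 * N = 7 * q + 17 \<or> 24 * N = 7 * q + 13 \<or> 24 * N = 7 * q + 29 \<or> 24 * N = 7*q + 9))"
  proof (cases "(3::'a) = 0")
    case True
    then show ?thesis using count_3[OF two True] unfolding N_def assms(1) by blast
  next
    case False
    then show ?thesis using count_ne3[OF two False] unfolding N_def assms(1) by blast
  qed
  have C': "(q mod 4 = 3 \<and> (3 * N + 2 = q \<or> 3 * N = q + 2 \<or> 3 * N = q))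
     \<or> (q mod 4 = 1 \<and> (24 * N = 7 * q + 1 \<or> 24 * N = 7 * q + 17 \<or> 24 * N = 7 * q + 13 \<or> 24 * N = 7 * q + 29 \<or> 24 * N = 7*q + 9))"
    using C m4 by auto
  show ?thesis using C'
  proof (elim disjE conjE)
    assume h4: "q mod 4 = 3" and h: "3 * N + 2 = q"
    have h3: "q mod 3 = 2" using h by presburger
    have m12: "q mod 12 = 11" using crt[of q] h4 h3 by simp
    have "N = (q - 2) div 3"
    proof -
      have e: "q - 2 = 0 + N * 3" using h by linarith
      show ?thesis unfolding e by simp
    qed
    then show ?thesis using m12 by (simp add: N_def)
  next
    assume h4: "q mod 4 = 3" and h: "3 * N = q + 2"
    have h3: "q mod 3 = 1" using m3b[OF \<open>3 * N = q + 2\<close>] by presburger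
    have m12: "q mod 12 = 7" using crt[of q] h4 h3 by simp
    have "N = (q + 2) div 3"
    proof -
      have e: "q + 2 = 0 + N * 3" using h by linarith
      show ?thesis unfolding e by simp
    qed
    then show ?thesis using m12 by (simp add: N_def)
  next
    assume h4: "q mod 4 = 3" and h: "3 * N = q"
    have h3: "q mod 3 = 0" unfolding \<open>3 * N = q\<close>[symmetric] by simp
    have m12: "q mod 12 = 3" using crt[of q] h4 h3 by simp
    have "N = (q + 2) div 3"
    proof -
      have e: "q + 2 = 2 + N * 3" using h by linarith
      show ?thesis unfolding e by simp
    qed
    then show ?thesis using m12 by (simp add: N_def)
  next
    assume h4: "q mod 4 = 1" and h: "24 * N = 7 * q + 1"
    have h3: "q mod 3 = 2" using m3[OF \<open>24 * N = 7 * q + 1\<close>] by presburger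
    have m12: "q mod 12 = 5" using crt[of q] h4 h3 by simp
    have "N = (7 * q + 13) div 24"
    proof -
      have e: "7 * q + 13 = 12 + N * 24" using h by linarith
      show ?thesis unfolding e by simp
    qed
    then show ?thesis using m12 by (simp add: N_def)
  next
    assume h4: "q mod 4 = 1" and h: "24 * N = 7 * q + 17"
    have h3: "q mod 3 = 1" using m3[OF \<open>24 * N = 7 * q + 17\<close>] by presburger
    have m12: "q mod 12 = 1" using crt[of q] h4 h3 by simp
    have "N = (7 * q + 29) div 24"
    proof -
      have e: "7 * q + 29 = 12 + N * 24" using h by linarith
      show ?thesis unfolding e by simp
    qed
    then show ?thesis using m12 by (simp add: N_def)
  next
    assume h4: "q mod 4 = 1" and h: "24 * N = 7 * q + 13"
    have h3: "q mod 3 = 2" using m3[OF \<open>24 * N = 7 * q + 13\<close>] by presburger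
    have m12: "q mod 12 = 5" using crt[of q] h4 h3 by simp
    have "N = (7 * q + 13) div 24"
    proof -
      have e: "7 * q + 13 = 0 + N * 24" using h by linarith
      show ?thesis unfolding e by simp
    qed
    then show ?thesis using m12 by (simp add: N_def)
  next
    assume h4: "q mod 4 = 1" and h: "24 * N = 7 * q + 29"
    have h3: "q mod 3 = 1" using m3[OF \<open>24 * N = 7 * q + 29\<close>] by presburger
    have m12: "q mod 12 = 1" using crt[of q] h4 h3 by simp
    have "N = (7 * q + 29) div 24"
    proof -
      have e: "7 * q + 29 = 0 + N * 24" using h by linarith
      show ?thesis unfolding e by simp
    qed
    then show ?thesis using m12 by (simp add: N_def)
  next
    assume h4: "q mod 4 = 1" and h: "24 * N = 7 * q + 9"
    have h3: "q mod 3 = 0" using m3[OF \<open>24 * N = 7 * q + 9\<close>] by presburger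
    have m12: "q mod 12 = 9" using crt[of q] h4 h3 by simp
    have "N = (7 * q + 13) div 24"
    proof -
      have e: "7 * q + 13 = 4 + N * 24" using h by linarith
      show ?thesis unfolding e by simp
    qed
    then show ?thesis using m12 by (simp add: N_def)
  qed
qed


end
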